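(* Assume the local Lipschitz condition (2.2) and let $h$ be as in (2.3). Let $\Delta\in(0,\Delta^*]$ be small enough that $|f(0)|\le h(\Delta)$, $|g(0)|\le h(\Delta)$ and $L_{h(\Delta)}\ge 1$. Then the modified truncated functions $f_\Delta$ and $g_\Delta$ are globally Lipschitz with constant $4L_{h(\Delta)}$: $$|f_\Delta(x)-f_\Delta(\bar x)|\vee|g_\Delta(x)-g_\Delta(\bar x)|\le 4L_{h(\Delta)}|x-\bar x|\qquad\text{for all }x,\bar x\in\mathbb{R}^d.$$
   Context: $f:\mathbb{R}^d\to\mathbb{R}^d$ and $g:\mathbb{R}^d\to\mathbb{R}^{d\times m}$ are measurable. $|\cdot|$ denotes the Euclidean norm of vectors and the trace norm $|A|=\sqrt{\mathrm{trace}(A^TA)}$ of matrices. Condition (2.2) (local Lipschitz): for every $R>0$ there is $L_R>0$ such that $|f(x)-f(\bar x)|\vee|g(x)-g(\bar x)|\le L_R|x-\bar x|$ whenever $|x|\vee|\bar x|\le R$; $L_R$ is nondecreasing in $R$ and $L_R\uparrow\infty$ as $R\to\infty$. Condition (2.3): $\Delta^*>0$ and $h:(0,\Delta^*]\to(0,\infty)$ is strictly positive and decreasing with $\lim_{\Delta\to0}h(\Delta)=\infty$ and $\lim_{\Delta\to0}L_{h(\Delta)}^4\Delta=0$. Modified truncated functions: for $\Delta\in(0,\Delta^*]$, $f_\Delta(x)=f(x)$ if $|x|\le h(\Delta)$ and $f_\Delta(x)=\frac{|x|}{h(\Delta)}\,f\!\left(h(\Delta)\frac{x}{|x|}\right)$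 if $|x|>h(\Delta)$; $g_\Delta$ is defined in the same way from $g$. *)

theory Defs
  imports "HOL-Analysis.Analysis"
begin

definition mtrunc :: "real \<Rightarrow> ('a::real_normed_vector \<Rightarrow> 'b::real_normed_vector) \<Rightarrow> 'a \<Rightarrow> 'b" where
  "mtrunc H F x = (if norm x \<le> H then F x else (norm x / H) *\<^sub>R F ((H / norm x) *\<^sub>R x))"

end

theory Submission
  imports Defs
begin

lemma trunc_lip_aux:
  fixes F :: "'a::real_normed_vector \<Rightarrow> 'b::real_normed_vector"
  assumes H: "H > 0" and K: "K \<ge> 1"
    and lip: "\<And>u v. norm u \<le> H \<Longrightarrow> norm v \<le> H \<Longrightarrow> norm (F u - F v) \<le> K * norm (u - v)"
    and F0: "norm (F 0) \<le> H"
    and yx: "norm y \<le> norm x"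
  shows "norm (mtrunc H F x - mtrunc H F y) \<le> 4 * K * norm (x - y)"
proof -
  define P where "P z = (if norm z \<le> H then z else (H / norm z) *\<^sub>R z)" for z :: 'a
  define r where "r z = max (norm z) H / H" for z :: 'a
  have mt: "mtrunc H F z = r z *\<^sub>R F (P z)" for z
    using H by (auto simp: mtrunc_def P_def r_def max_def)
  have Pn: "norm (P z) \<le> H" for z
    using H by (auto simp: P_def)
  have r1: "r z \<ge> 1" for z using H by (simp add: r_def)
  have rd: "\<bar>r x - r y\<bar> \<le> norm (x - y) / H"
  proof -
    have "\<bar>max (norm x) H - max (norm y) H\<bar> \<le> norm (x - y)"
      using norm_triangle_ineq3[of x y] by (auto simp: max_def)
    thus ?thesis using H by (simp add: r_def diff_divide_distrib[symmetric] divide_right_mono)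
  qed
  have FP: "norm (F (P x)) \<le> 2 * K * H"
  proof -
    have "norm (F (P x)) \<le> norm (F (P x) - F 0) + norm (F 0)"
      using norm_triangle_ineq[of "F (P x) - F 0" "F 0"] by simp
    also have "\<dots> \<le> K * norm (P x) + H" using lip[OF Pn[of x], of 0] H F0 by (intro add_mono) auto
    also have "\<dots> \<le> K * H + K * H" using Pn[of x] K H
      by (intro add_mono mult_left_mono) auto
    finally show ?thesis by (simp add: algebra_simps)
  qed
  have rP: "r y * norm (P x - P y) \<le> 2 * norm (x - y)"
  proof (cases "norm x \<le> H")
    case True
    then have "norm y \<le> H" using yx by simp
    then show ?thesis using True H by (simp add: P_def r_def max_def)
  next
    case xg: False
    have ex: "norm ((H / norm x) *\<^sub>R x - x) = norm x - H"
    proof -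
      have "(H / norm x) *\<^sub>R x - x = (H / norm x - 1) *\<^sub>R x" by (simp add: algebra_simps)
      moreover have "H / norm x \<le> 1" using xg H by (simp add: divide_le_eq_1)
      hence "\<bar>H / norm x - 1\<bar> = 1 - H / norm x" by simp
      ultimately have "norm ((H / norm x) *\<^sub>R x - x) = (1 - H / norm x) * norm x" by simp
      also have "\<dots> = norm x - H" using xg H by (auto simp: field_simps)
      finally show ?thesis .
    qed
    show ?thesis
    proof (cases "norm y \<le> H")
      case True
      have "norm (P x - P y) = norm (((H / norm x) *\<^sub>R x - x) + (x - y))"
        using xg True by (simp add: P_def)
      also have "\<dots> \<le> (norm x - H) + norm (x - y)" using ex norm_triangle_ineq by metis
      also have "\<dots> \<le> 2 * norm (x - y)" using True norm_triangle_ineq3[of x y] by simp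
      finally show ?thesis using True H by (simp add: r_def max_def)
    next
      case yg: False
      have ny: "norm y > 0" using yg H by linarith
      have "r y *\<^sub>R (P x - P y) = (norm y / norm x) *\<^sub>R x - y"
        using xg yg H ny by (simp add: P_def r_def max_def algebra_simps)
      hence "r y * norm (P x - P y) = norm ((norm y / norm x) *\<^sub>R x - y)"
        using r1[of y] by (metis abs_of_nonneg norm_scaleR order_trans zero_le_one)
      also have "\<dots> = norm (((norm y / norm x) *\<^sub>R x - x) + (x - y))" by simp
      also have "\<dots> \<le> norm ((norm y / norm x) *\<^sub>R x - x) + norm (x - y)"
        by (rule norm_triangle_ineq)
      also have "norm ((norm y / norm x) *\<^sub>R x - x) = norm x - norm y"
      proof -
        have "(norm y / norm x) *\<^sub>R x - x = (norm y / norm x - 1) *\<^sub>R x" by (simp add: algebra_simps)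
        moreover have "norm y / norm x \<le> 1" using yx ny by (simp add: divide_le_eq_1)
        hence "\<bar>norm y / norm x - 1\<bar> = 1 - norm y / norm x" by simp
        ultimately have "norm ((norm y / norm x) *\<^sub>R x - x) = (1 - norm y / norm x) * norm x" by simp
        also have "\<dots> = norm x - norm y" using ny yx by (auto simp: field_simps)
        finally show ?thesis .
      qed
      also have "norm x - norm y + norm (x - y) \<le> 2 * norm (x - y)"
        using norm_triangle_ineq2[of x y] by simp
      finally show ?thesis .
    qed
  qed
  have eq: "mtrunc H F x - mtrunc H F y = r y *\<^sub>R (F (P x) - F (P y)) + (r x - r y) *\<^sub>R F (P x)"
    by (simp add: mt algebra_simps)
  have t1: "norm (r y *\<^sub>R (F (P x) - F (P y))) \<le> 2 * K * norm (x - y)"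
  proof -
    have "norm (r y *\<^sub>R (F (P x) - F (P y))) = r y * norm (F (P x) - F (P y))"
      using r1[of y] by simp
    also have "\<dots> \<le> r y * (K * norm (P x - P y))"
      using lip[OF Pn Pn] r1[of y] by (intro mult_left_mono) auto
    also have "\<dots> = K * (r y * norm (P x - P y))" by simp
    also have "\<dots> \<le> K * (2 * norm (x - y))" using rP K by (intro mult_left_mono) auto
    finally show ?thesis by simp
  qed
  have t2: "norm ((r x - r y) *\<^sub>R F (P x)) \<le> 2 * K * norm (x - y)"
  proof -
    have "norm ((r x - r y) *\<^sub>R F (P x)) = \<bar>r x - r y\<bar> * norm (F (P x))" by simp
    also have "\<dots> \<le> (norm (x - y) / H) * (2 * K * H)"
      using rd FP by (intro mult_mono) auto
    also have "\<dots> = 2 * K * norm (x - y)" using H by simp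
    finally show ?thesis .
  qed
  show ?thesis unfolding eq using norm_triangle_ineq[of "r y *\<^sub>R (F (P x) - F (P y))" "(r x - r y) *\<^sub>R F (P x)"] t1 t2
    by simp
qed

lemma trunc_lip:
  fixes F :: "'a::real_normed_vector \<Rightarrow> 'b::real_normed_vector"
  assumes H: "H > 0" and K: "K \<ge> 1"
    and lip: "\<And>u v. norm u \<le> H \<Longrightarrow> norm v \<le> H \<Longrightarrow> norm (F u - F v) \<le> K * norm (u - v)"
    and F0: "norm (F 0) \<le> H"
  shows "norm (mtrunc H F x - mtrunc H F y) \<le> 4 * K * norm (x - y)"
proof (cases "norm y \<le> norm x")
  case True
  then show ?thesis using trunc_lip_aux[OF assms] by blast
next
  case False
  then have "norm (mtrunc H F y - mtrunc H F x) \<le> 4 * K * norm (y - x)"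
    using trunc_lip_aux[OF assms, of x y] by simp
  then show ?thesis by (simp add: norm_minus_commute)
qed

theorem lemma2p2:
  fixes f :: "real^'d \<Rightarrow> real^'d"
    and g :: "real^'d \<Rightarrow> real^'m^'d"
    and L :: "real \<Rightarrow> real"
    and h :: "real \<Rightarrow> real"
    and \<Delta>star \<Delta> :: real
  assumes f_meas: "f \<in> borel_measurable borel"
    and g_meas: "g \<in> borel_measurable borel"
    and L_pos: "\<And>R. R > 0 \<Longrightarrow> L R > 0"
    and loc_lip: "\<And>R x xb. R > 0 \<Longrightarrow> max (norm x) (norm xb) \<le> R \<Longrightarrow>
        max (norm (f x - f xb)) (norm (g x - g xb)) \<le> L R * norm (x - xb)"
    and L_mono: "\<And>R R'. 0 < R \<Longrightarrow> R \<le> R' \<Longrightarrow> L R \<le> L R'"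
    and L_inf: "filterlim L at_top at_top"
    and Dstar_pos: "\<Delta>star > 0"
    and h_pos: "\<And>D. 0 < D \<Longrightarrow> D \<le> \<Delta>star \<Longrightarrow> h D > 0"
    and h_decr: "\<And>D D'. 0 < D \<Longrightarrow> D \<le> D' \<Longrightarrow> D' \<le> \<Delta>star \<Longrightarrow> h D' \<le> h D"
    and h_lim: "filterlim h at_top (at_right 0)"
    and hL_lim: "((\<lambda>D. (L (h D))^4 * D) \<longlongrightarrow> 0) (at_right 0)"
    and D_range: "0 < \<Delta>" "\<Delta> \<le> \<Delta>star"
    and f0: "norm (f 0) \<le> h \<Delta>"
    and g0: "norm (g 0) \<le> h \<Delta>"
    and L1: "L (h \<Delta>) \<ge> 1"
  shows "\<forall>x xb. max (norm (mtrunc (h \<Delta>) f x - mtrunc (h \<Delta>) f xb))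
                    (norm (mtrunc (h \<Delta>) g x - mtrunc (h \<Delta>) g xb))
                 \<le> 4 * L (h \<Delta>) * norm (x - xb)"
proof (intro allI)
  fix x xb :: "real^'d"
  have H: "h \<Delta> > 0" using h_pos D_range by simp
  have lf: "norm (f u - f v) \<le> L (h \<Delta>) * norm (u - v)" if "norm u \<le> h \<Delta>" "norm v \<le> h \<Delta>" for u v
    using loc_lip[OF H, of u v] that by simp
  have lg: "norm (g u - g v) \<le> L (h \<Delta>) * norm (u - v)" if "norm u \<le> h \<Delta>" "norm v \<le> h \<Delta>" for u v
    using loc_lip[OF H, of u v] that by simp
  show "max (norm (mtrunc (h \<Delta>) f x - mtrunc (h \<Delta>) f xb))
                    (norm (mtrunc (h \<Delta>) g x - mtrunc (h \<Delta>) g xb))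
                 \<le> 4 * L (h \<Delta>) * norm (x - xb)"
    using trunc_lip[OF H L1 lf f0] trunc_lip[OF H L1 lg g0] by simp
qed

end
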